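(* Let $\nu\ge7$ and $n=2^\nu$. Then the alternating group $\mathrm{Alt}((\mathbb{F}_2)^\nu)$ on the $n$-element set $(\mathbb{F}_2)^\nu$ contains an element $\eta$ of even order with $\mathrm{o}(\eta)>e^{\sqrt{(1/4)\,n\ln n}}$.
   Context: $\mathrm{o}(\eta)$ denotes the order of the permutation $\eta$. *)

theory Defs
  imports Complex_Main "HOL-Combinatorics.Permutations"
begin

definition F2vec :: "nat \<Rightarrow> bool list set" where
  "F2vec \<nu> = {xs. length xs = \<nu>}"

definition Alt :: "'a set \<Rightarrow> ('a \<Rightarrow> 'a) set" where
  "Alt X = {p. p permutes X \<and> evenperm p}"

definition perm_order :: "('a \<Rightarrow> 'a) \<Rightarrow> nat" where
  "perm_order p = (LEAST k. 0 < k \<and> (p ^^ k) = id)"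

end

theory Submission
  imports Defs "HOL-Analysis.Harmonic_Numbers" "HOL-Computational_Algebra.Primes"
begin


definition cyc :: "nat \<times> nat \<Rightarrow> nat \<times> nat" where
  "cyc = (\<lambda>(l,r). (l, Suc r mod l))"

lemma cyc_pow: "r < l \<Longrightarrow> (cyc ^^ k) (l,r) = (l, (r + k) mod l)"
proof (induction k)
  case 0 then show ?case by simp
next
  case (Suc k) then show ?case by (simp add: cyc_def mod_Suc_eq)
qed

lemma witness:
  fixes X :: "'a set" and A :: "nat set"
  assumes X: "finite X" and A: "finite A" "0 \<notin> A" and S: "\<Sum>A \<le> card X"
    and F: "4 dvd Lcm A"
  shows "\<exists>\<eta>\<in>Alt X. perm_order \<eta> = Lcm A div 2"
proof -
  define Y where "Y = Sigma A (\<lambda>l. {..<l})"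
  have fY: "finite Y" using A by (auto simp: Y_def)
  have cY: "card Y = \<Sum>A" using A by (simp add: Y_def card_SigmaI)
  obtain g where g: "g ` Y \<subseteq> X" "inj_on g Y" using card_le_inj[OF fY X] cY S by auto
  define \<theta> where "\<theta> x = (if x \<in> g ` Y then g (cyc (inv_into Y g x)) else x)" for x
  have cycY: "cyc y \<in> Y" if "y \<in> Y" for y
    using that A by (auto simp: Y_def cyc_def)
  have cycYk: "(cyc ^^ k) y \<in> Y" if "y \<in> Y" for y k
    using that by (induction k) (auto intro: cycY)
  have pow: "(\<theta> ^^ k) x = (if x \<in> g ` Y then g ((cyc ^^ k) (inv_into Y g x)) else x)" for k x
  proof (induction k)
    case 0 then show ?case by (auto simp: inv_into_f_f g)
  next
    case (Suc k)
    show ?case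
    proof (cases "x \<in> g ` Y")
      case True
      then obtain y where y: "y \<in> Y" "x = g y" by auto
      have "(\<theta> ^^ Suc k) x = \<theta> (g ((cyc ^^ k) y))" using Suc y g by (simp add: inv_into_f_f)
      also have "\<dots> = g (cyc ((cyc ^^ k) y))"
        using cycYk[OF y(1)] g by (simp add: \<theta>_def inv_into_f_f)
      finally show ?thesis using y g by (simp add: inv_into_f_f)
    next
      case False then show ?thesis using Suc by (simp add: \<theta>_def)
    qed
  qed
  have iff: "(\<theta> ^^ k = id) \<longleftrightarrow> (\<forall>l\<in>A. l dvd k)" for k
  proof
    assume h: "\<theta> ^^ k = id"
    show "\<forall>l\<in>A. l dvd k"
    proof
      fix l assume l: "l \<in> A"
      then have l0: "0 < l" using A by (cases l) auto
      have y: "(l,0) \<in> Y" using l l0 by (simp add: Y_def)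
      have "(\<theta> ^^ k) (g (l,0)) = g (l,0)" using h by simp
      then have "g ((cyc ^^ k) (l,0)) = g (l,0)" using pow[of k "g (l,0)"] y g by (simp add: inv_into_f_f)
      then have "(cyc ^^ k) (l,0) = (l,0)" using g(2) y cycYk[OF y] by (meson inj_onD)
      then show "l dvd k" using cyc_pow[OF l0, of k] by (simp add: mod_eq_0_iff_dvd)
    qed
  next
    assume h: "\<forall>l\<in>A. l dvd k"
    show "\<theta> ^^ k = id"
    proof
      fix x
      show "(\<theta> ^^ k) x = id x"
      proof (cases "x \<in> g ` Y")
        case True
        then obtain l r where y: "(l,r) \<in> Y" "x = g (l,r)" by auto
        then have "l \<in> A" "r < l" by (auto simp: Y_def)
        then have "(cyc ^^ k) (l,r) = (l,r)" using h cyc_pow[of r l k]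
          by (metis dvd_imp_mod_0 mod_add_right_eq add.right_neutral mod_less)
        then show ?thesis using pow[of k x] y g by (simp add: inv_into_f_f)
      qed (simp add: pow)
    qed
  qed
  define L where "L = Lcm A"
  have L0: "L \<noteq> 0" using A by (simp add: L_def Lcm_0_iff)
  have iffL: "(\<theta> ^^ k = id) \<longleftrightarrow> L dvd k" for k
    unfolding iff L_def by (auto intro: Lcm_least dvd_trans[OF dvd_Lcm])
  have mapX: "(\<theta> ^^ k) x \<in> X" if "x \<in> X" for x k
    using that g cycYk by (auto simp: pow inv_into_into)
  have fix_out: "\<theta> x = x" if "x \<notin> X" for x
    using that g by (auto simp: \<theta>_def)
  have Lpow: "(\<theta> ^^ L) x = x" for x using iffL[of L] by simp
  have bij: "bij_betw \<theta> X X"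
  proof (rule bij_betwI[where g = "\<theta> ^^ (L - 1)"])
    show "\<theta> \<in> X \<rightarrow> X" using mapX[of _ 1] by auto
    show "\<theta> ^^ (L - 1) \<in> X \<rightarrow> X" using mapX by auto
    show "(\<theta> ^^ (L - 1)) (\<theta> x) = x" for x
      using Lpow[of x] L0 by (metis Suc_pred' bot_nat_0.not_eq_extremum comp_apply funpow_Suc_right)
    show "\<theta> ((\<theta> ^^ (L - 1)) x) = x" for x
      using Lpow[of x] L0 by (metis Suc_pred' bot_nat_0.not_eq_extremum comp_apply funpow.simps(2))
  qed
  have perm: "\<theta> permutes X" by (rule bij_imp_permutes[OF bij fix_out])
  have permu: "permutation \<theta>" using perm X permutation_permutes by blast
  define \<eta> where "\<eta> = \<theta> \<circ> \<theta>"
  have ep: "\<eta> permutes X" unfolding \<eta>_def by (rule permutes_compose[OF perm perm])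
  have ev: "evenperm \<eta>" unfolding \<eta>_def by (simp add: evenperm_comp[OF permu permu])
  have etapow: "\<eta> ^^ k = \<theta> ^^ (2 * k)" for k
  proof -
    have "\<eta> = \<theta> ^^ 2" by (simp add: \<eta>_def numeral_2_eq_2)
    then show ?thesis by (simp add: funpow_mult mult.commute)
  qed
  have "perm_order \<eta> = L div 2"
    unfolding perm_order_def etapow iffL
  proof (rule Least_equality)
    have "4 dvd L" using F by (simp add: L_def)
    then show "0 < L div 2 \<and> L dvd 2 * (L div 2)" using L0 by auto
  next
    fix y assume "0 < y \<and> L dvd 2 * y"
    then have "L \<le> 2 * y" by (auto intro: dvd_imp_le)
    then show "L div 2 \<le> y" by simp
  qed
  then show ?thesis using ep ev by (auto simp: Alt_def L_def)
qed



definition Ssum :: "nat \<Rightarrow> nat \<Rightarrow> real" where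
  "Ssum a b = (\<Sum>i\<le>b. (-1)^i * real (b choose i) / real (a + i))"

lemma Ssum_Suc: "a \<ge> 1 \<Longrightarrow> Ssum a (Suc b) = Ssum a b - Ssum (Suc a) b"
proof -
  assume a: "a \<ge> 1"
  have "Ssum a (Suc b) = 1 / real a + (\<Sum>i\<le>b. (-1)^(Suc i) * real (Suc b choose Suc i) / real (a + Suc i))"
    unfolding Ssum_def by (subst sum.atMost_Suc_shift) simp
  also have "\<dots> = 1 / real a + (\<Sum>i\<le>b. (-1)^(Suc i) * real (b choose Suc i) / real (a + Suc i))
      - (\<Sum>i\<le>b. (-1)^i * real (b choose i) / real (Suc a + i))"
  proof -
    have pt: "(-1)^(Suc i) * real (Suc b choose Suc i) / real (a + Suc i) =
       (-1)^(Suc i) * real (b choose Suc i) / real (a + Suc i) - (-1)^i * real (b choose i) / real (Suc a + i)" for i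
    proof -
      have e1: "real (Suc b choose Suc i) = real (b choose i) + real (b choose Suc i)" by simp
      have e2: "real (Suc a + i) = real (a + Suc i)" by simp
      show ?thesis unfolding e1 e2 by (simp add: diff_divide_distrib add_divide_distrib algebra_simps)
    qed
    show ?thesis by (simp only: pt sum_subtractf)
  qed
  also have "1 / real a + (\<Sum>i\<le>b. (-1)^(Suc i) * real (b choose Suc i) / real (a + Suc i)) = Ssum a b"
  proof -
    have "Ssum a b = (\<Sum>i\<le>Suc b. (-1)^i * real (b choose i) / real (a + i))"
      unfolding Ssum_def by simp
    also have "\<dots> = 1 / real a + (\<Sum>i\<le>b. (-1)^(Suc i) * real (b choose Suc i) / real (a + Suc i))"
      by (subst sum.atMost_Suc_shift) simp
    finally show ?thesis by simp
  qed
  finally show ?thesis unfolding Ssum_def by simp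
qed

lemma Ssum_eq: "a \<ge> 1 \<Longrightarrow> Ssum a b = fact b * fact (a - 1) / fact (a + b)"
proof (induction b arbitrary: a)
  case 0
  show ?case
  proof -
    obtain c where c: "a = Suc c" using 0 by (cases a) auto
    have "fact (Suc c) = real (Suc c) * (fact c :: real)" by simp
    moreover have "(fact c :: real) \<noteq> 0" by simp
    ultimately show ?thesis unfolding c by (simp add: Ssum_def)
  qed
next
  case (Suc b)
  have "Ssum a (Suc b) = Ssum a b - Ssum (Suc a) b" using Suc.prems by (rule Ssum_Suc)
  also have "\<dots> = fact b * fact (a - 1) / fact (a + b) - fact b * fact a / fact (Suc a + b)"
    using Suc by simp
  also have "\<dots> = fact (Suc b) * fact (a - 1) / fact (a + Suc b)"
  proof -
    obtain c where c: "a = Suc c" using Suc.prems by (cases a) auto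
    define F :: real where "F = fact (Suc c + b)"
    have F0: "F > 0" by (simp add: F_def)
    have f1: "fact (Suc (Suc c) + b) = real (c + b + 2) * F" unfolding F_def
      by (metis add_2_eq_Suc' add_Suc add_Suc_shift fact_Suc of_nat_fact of_nat_mult)
    have f2: "fact (Suc c + Suc b) = real (c + b + 2) * F" unfolding F_def
      by (metis add_2_eq_Suc' add_Suc add_Suc_right fact_Suc of_nat_fact of_nat_mult add.commute)
    have f3: "fact (Suc c) = real (c+1) * (fact c :: real)" by simp
    have f4: "fact (Suc b) = real (b+1) * (fact b :: real)" by simp
    have D0: "real (c + b + 2) * F \<noteq> 0" using F0 by simp
    have eq: "real (c+b+2) * (fact b * fact c) - fact b * (real (c+1) * fact c) = real (b+1) * fact b * (fact c::real)"
      by (simp add: algebra_simps)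
    have "fact b * fact c / F - fact b * (real (c+1) * fact c) / (real (c + b + 2) * F)
        = (real (c+b+2) * (fact b * fact c) - fact b * (real (c+1) * fact c)) / (real (c + b + 2) * F)"
      using F0 by (simp add: diff_divide_distrib)
    also have "\<dots> = real (b+1) * fact b * fact c / (real (c + b + 2) * F)" unfolding eq ..
    finally show ?thesis unfolding c diff_Suc_1 f1 f2 f3 f4 F_def[symmetric] by simp
  qed
  finally show ?case .
qed

lemma nair_dvd:
  assumes a: "a \<ge> 1"
  shows "a * ((a + b) choose a) dvd Lcm {1..a+b}"
proof -
  define L where "L = Lcm {1..a+b}"
  define C where "C = (a + b) choose a"
  have C0: "C > 0" by (simp add: C_def)
  have dv: "a + i dvd L" if "i \<le> b" for i
    using that a unfolding L_def by (intro dvd_Lcm) auto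
  have fa: "fact a = real a * fact (a - 1)" using a by (cases a) auto
  have "fact a * fact b * real C = fact (a + b)"
  proof -
    have "real (fact a * fact (a + b - a) * ((a+b) choose a)) = real (fact (a + b))"
      using binomial_fact_lemma[of a "a+b"] by simp
    then show ?thesis unfolding C_def by (simp only: of_nat_mult of_nat_fact) simp
  qed
  then have key: "real a * real C * (fact b * fact (a - 1)) = fact (a + b)"
    unfolding fa by (simp add: algebra_simps)
  have X0: "(fact b * fact (a - 1) :: real) \<noteq> 0" by simp
  have Seq: "Ssum a b = 1 / (real a * real C)"
  proof -
    have "Ssum a b = (fact b * fact (a - 1)) / (real a * real C * (fact b * fact (a - 1)))"
      using Ssum_eq[OF a, of b] key by simp
    also have "\<dots> = 1 / (real a * real C)" using X0 by simp
    finally show ?thesis .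
  qed
  define z :: int where "z = (\<Sum>i\<le>b. (-1)^i * int (b choose i) * int (L div (a + i)))"
  have "real_of_int z = (\<Sum>i\<le>b. (-1)^i * real (b choose i) * (real L / real (a + i)))"
    unfolding z_def using dv by (auto intro!: sum.cong simp: real_of_nat_div)
  also have "\<dots> = real L * Ssum a b"
    unfolding Ssum_def by (simp add: sum_distrib_left field_simps)
  finally have "real_of_int z = real L / (real a * real C)" using Seq by simp
  then have "real L = real (a * C) * real_of_int z" using a C0 by (simp add: field_simps)
  then have "int L = int (a * C) * z" by (metis of_int_eq_iff of_int_mult of_int_of_nat_eq)
  then have "int (a * C) dvd int L" by (metis dvd_triv_left)
  then have "a * C dvd L" by (simp only: int_dvd_int_iff)
  then show ?thesis unfolding L_def C_def .
qed

definition LL :: "nat \<Rightarrow> nat" where "LL N = Lcm {1..N}"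

lemma LL_pos: "LL N > 0"
proof -
  have "Lcm {1..N} \<noteq> (0::nat)" by (simp add: Lcm_0_iff)
  then show ?thesis unfolding LL_def by (metis gr0I)
qed

lemma dvd_LL: "1 \<le> k \<Longrightarrow> k \<le> N \<Longrightarrow> k dvd LL N"
  unfolding LL_def by (auto intro: dvd_Lcm)

lemma LL_mono: "M \<le> N \<Longrightarrow> LL M dvd LL N"
  unfolding LL_def by (auto intro: Lcm_subset)

lemma LL_odd_lower: "4 ^ m \<le> LL (2 * m + 1)"
proof -
  have eq: "m + 1 + m = 2*m+1" by simp
  have d: "(m + 1) * ((2*m+1) choose (m + 1)) dvd LL (2 * m + 1)"
    using nair_dvd[of "m+1" m] unfolding LL_def eq by simp
  have sym: "(2*m+1) choose (m+1) = (2*m+1) choose m"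
    by (metis add.commute add_Suc_right binomial_symmetric diff_add_inverse le_add2 mult_2 plus_1_eq_Suc)
  have "2 ^ (2*m+1) = (\<Sum>k\<le>2*m+1. (2*m+1) choose k)" by (simp only: choose_row_sum)
  also have "\<dots> \<le> (\<Sum>k\<le>2*m+1. (2*m+1) choose m)"
    using binomial_maximum[of "2*m+1"] by (intro sum_mono) simp
  also have "\<dots> = (2*m+2) * ((2*m+1) choose m)" by simp
  finally have h: "2 ^ (2*m+1) \<le> (2*m+2) * ((2*m+1) choose m)" .
  have e: "(2::nat) ^ (2*m+1) = 2 * 4^m" by (simp add: power_add power_mult)
  have e2: "(2*m+2) * ((2*m+1) choose m) = 2 * ((m+1) * ((2*m+1) choose m))" by simp
  have "2 * 4^m \<le> 2 * ((m+1) * ((2*m+1) choose m))" using h unfolding e e2 .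
  then have "4^m \<le> (m+1) * ((2*m+1) choose (m+1))" using sym by simp
  also have "\<dots> \<le> LL (2*m+1)" using d LL_pos
    by (intro dvd_imp_le) (auto simp: mult_2)
  finally show ?thesis .
qed

lemma LL_lower: "N \<ge> 2 \<Longrightarrow> 2 ^ (N - 2) \<le> LL N"
proof -
  assume N: "N \<ge> 2"
  define m where "m = (N - 1) div 2"
  have "2 ^ (N - 2) \<le> (2::nat) ^ (2 * m)" using N unfolding m_def by (intro power_increasing) auto
  also have "\<dots> = 4 ^ m" by (simp add: power_mult)
  also have "\<dots> \<le> LL (2 * m + 1)" by (rule LL_odd_lower)
  also have "\<dots> \<le> LL N"
  proof -
    have "2 * m + 1 \<le> N" using N unfolding m_def by linarith
    then show ?thesis using LL_mono[of "2*m+1" N] LL_pos[of N] by (simp add: dvd_imp_le)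
  qed
  finally show ?thesis .
qed



lemma pp_dvd_Lcm:
  fixes A :: "nat set"
  assumes "finite A" "0 \<notin> A" "prime p" "p ^ a dvd Lcm A" "a > 0"
  shows "\<exists>x\<in>A. p ^ a dvd x"
  using assms
proof (induction A rule: finite_induct)
  case empty
  then have "p ^ a dvd 1" by simp
  then have "p dvd 1" using \<open>a > 0\<close> by (meson dvd_power dvd_trans)
  then show ?case using \<open>prime p\<close> by simp
next
  case (insert x A)
  have x0: "x \<noteq> 0" using insert by auto
  have L0: "Lcm A \<noteq> 0" using insert by (simp add: Lcm_0_iff)
  have l0: "lcm x (Lcm A) \<noteq> 0" using x0 L0 by simp
  have "p ^ a dvd lcm x (Lcm A)" using insert.prems by simp
  then have "a \<le> multiplicity p (lcm x (Lcm A))"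
    using l0 insert.prems by (intro multiplicity_geI) auto
  then have "a \<le> multiplicity p x \<or> a \<le> multiplicity p (Lcm A)"
    using multiplicity_lcm[OF x0 L0 \<open>prime p\<close>] by auto
  then show ?case
  proof
    assume "a \<le> multiplicity p x"
    then show ?case by (auto intro: multiplicity_dvd')
  next
    assume "a \<le> multiplicity p (Lcm A)"
    then have "p ^ a dvd Lcm A" by (rule multiplicity_dvd')
    then show ?case using insert by auto
  qed
qed

definition pcomp :: "nat \<Rightarrow> nat \<Rightarrow> nat" where "pcomp N p = p ^ multiplicity p (LL N)"
definition PF :: "nat \<Rightarrow> nat set" where "PF N = prime_factors (LL N)"
definition CS :: "nat \<Rightarrow> nat set" where "CS N = pcomp N ` PF N"
definition cc :: "nat \<Rightarrow> nat" where "cc N = \<Sum>(CS N)"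

lemma PF_prime: "p \<in> PF N \<Longrightarrow> prime p"
  unfolding PF_def by auto

lemma PF_mult: "p \<in> PF N \<Longrightarrow> multiplicity p (LL N) > 0"
  unfolding PF_def by (simp add: prime_factors_multiplicity)

lemma finite_PF: "finite (PF N)" unfolding PF_def by simp

lemma comp_dvd: "pcomp N p dvd LL N"
  unfolding pcomp_def by (rule multiplicity_dvd)

lemma comp_le: "p \<in> PF N \<Longrightarrow> pcomp N p \<le> N"
proof -
  assume p: "p \<in> PF N"
  have "\<exists>x\<in>{1..N}. pcomp N p dvd x"
    unfolding pcomp_def using comp_dvd[of N p] PF_prime[OF p] PF_mult[OF p]
    by (intro pp_dvd_Lcm) (auto simp: LL_def pcomp_def)
  then show ?thesis by (auto dest: dvd_imp_le)
qed

lemma comp_ge: "p \<in> PF N \<Longrightarrow> p \<le> pcomp N p"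
proof -
  assume p: "p \<in> PF N"
  have "p > 0" using PF_prime[OF p] prime_gt_0_nat by blast
  then show ?thesis unfolding pcomp_def using PF_mult[OF p]
    by (metis One_nat_def Suc_leI power_increasing power_one_right)
qed

lemma comp_ge2: "p \<in> PF N \<Longrightarrow> 2 \<le> pcomp N p"
  using comp_ge PF_prime prime_ge_2_nat le_trans by blast

lemma comp_inj: "inj_on (pcomp N) (PF N)"
proof
  fix p q assume p: "p \<in> PF N" and q: "q \<in> PF N" and e: "pcomp N p = pcomp N q"
  show "p = q" using prime_power_inj'(1)[OF PF_prime[OF p] PF_prime[OF q] e[unfolded pcomp_def]]
      PF_mult[OF p] PF_mult[OF q] by blast
qed

lemma LL_prod: "LL N = (\<Prod>p\<in>PF N. pcomp N p)"
  unfolding PF_def pcomp_def using prime_factorization_nat[OF LL_pos[of N]] by simp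

lemma cc_eq: "cc N = (\<Sum>p\<in>PF N. pcomp N p)"
  unfolding cc_def CS_def using comp_inj by (simp add: sum.reindex)

lemma finite_CS: "finite (CS N)" unfolding CS_def using finite_PF by simp

lemma zero_CS: "0 \<notin> CS N" unfolding CS_def using comp_ge2 by fastforce

lemma Lcm_CS: "Lcm (CS N) = LL N"
proof (rule dvd_antisym)
  show "Lcm (CS N) dvd LL N" unfolding CS_def by (auto intro: Lcm_least comp_dvd)
  have C0: "Lcm (CS N) \<noteq> 0" using finite_CS zero_CS by (simp add: Lcm_0_iff)
  show "LL N dvd Lcm (CS N)"
  proof (rule multiplicity_le_imp_dvd)
    show "LL N \<noteq> 0" using LL_pos[of N] by simp
    fix p :: nat assume p: "prime p"
    show "multiplicity p (LL N) \<le> multiplicity p (Lcm (CS N))"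
    proof (cases "p \<in> PF N")
      case True
      have "pcomp N p dvd Lcm (CS N)" unfolding CS_def using True by (auto intro: dvd_Lcm)
      then show ?thesis unfolding pcomp_def using C0 p by (intro multiplicity_geI) auto
    next
      case False
      then have "multiplicity p (LL N) = 0"
        using p LL_pos[of N] unfolding PF_def by (simp add: prime_factors_multiplicity)
      then show ?thesis by simp
    qed
  qed
qed

lemma PF_sub: "PF N \<subseteq> {1..N}"
  using comp_ge comp_le PF_prime prime_ge_1_nat by (force)

lemma cc_le_sq: "cc N \<le> N * N"
proof -
  have "cc N \<le> card (PF N) * N" unfolding cc_eq using comp_le
    by (metis (no_types, lifting) sum_bounded_above of_nat_id)
  also have "card (PF N) \<le> N" using card_mono[OF _ PF_sub[of N]] by simp
  then have "card (PF N) * N \<le> N * N" by simp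
  finally show ?thesis .
qed

lemma ln_LL: "ln (real (LL N)) = (\<Sum>p\<in>PF N. ln (real (pcomp N p)))"
proof -
  have "real (LL N) = (\<Prod>p\<in>PF N. real (pcomp N p))" by (subst LL_prod) simp
  moreover have "ln (\<Prod>p\<in>PF N. real (pcomp N p)) = (\<Sum>p\<in>PF N. ln (real (pcomp N p)))"
  proof (rule ln_prod[OF finite_PF])
    fix p assume "p \<in> PF N" then show "real (pcomp N p) \<noteq> 0" using comp_ge2[of p N] by simp
  qed
  ultimately show ?thesis by simp
qed

lemma q_ln: fixes q N :: nat
  assumes "2 \<le> q" "q \<le> N" "4 \<le> N"
  shows "real q * ln (real N) \<le> real N * ln (real q)"
proof -
  have e3: "exp 1 \<le> (3::real)" by (rule exp_le)
  have qN: "real q \<le> real N" using assms by simp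
  have "ln (real N) / real N \<le> ln (real q) / real q"
  proof (cases "q \<ge> 3")
    case True
    then have "(3::real) \<le> real q" by simp
    then have "exp 1 \<le> real q" using e3 by linarith
    then show ?thesis using ln_x_over_x_mono qN by blast
  next
    case False
    have q2: "q = 2" using False assms by simp
    have "exp 1 \<le> (4::real)" using e3 by linarith
    moreover have "4 \<le> real N" using assms by simp
    ultimately have "ln (real N) / real N \<le> ln 4 / 4" using ln_x_over_x_mono by blast
    also have "ln (4::real) = 2 * ln 2" using ln_realpow[of 2 2] by simp
    finally show ?thesis using q2 by simp
  qed
  moreover have "real q > 0" "real N > 0" using assms by auto
  ultimately show ?thesis by (simp add: divide_le_eq le_divide_eq mult.commute)
qed



lemma K_id: "((M - 3) * a - a)^2 - M * ((M - 3) * a) / 2 - M * (M / 16 + 4 * a - 1) / 2 - ((4/9) * (M-4)^2 - M*(M-3)/3 - M^2/32 - 4*M/3 + M/2)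
        = (a - 2/3) * ((a + 2/3) * (M-4)^2 - M*(M-3)/2 - 2*(M::real))"
  by (simp add: power2_eq_square field_simps)

lemma lin_aux: "R \<le> S \<Longrightarrow> T - U/2 \<le> P - Q/2 \<Longrightarrow> 0 \<le> T - U/2 - S/2 \<Longrightarrow> (Q+R)/2 \<le> (P::real)"
proof -
  assume "R \<le> S" "T - U/2 \<le> P - Q/2" "0 \<le> T - U/2 - S/2"
  then have "Q/2 + R/2 \<le> P" by linarith
  then show ?thesis by (simp add: add_divide_distrib)
qed

lemma K_ineq:
  fixes M \<Lambda> :: real
  assumes M: "M \<ge> 41" and L: "\<Lambda> \<ge> (M - 3) * ln 2"
  shows "(\<Lambda> - ln 2)^2 \<ge> (M * \<Lambda> + M * ln M) / 2"
proof -
  define a where "a = ln (2::real)"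
  have a1: "2/3 \<le> a" using ln2_ge_two_thirds by (simp add: a_def)
  have a2: "a \<le> 25/36" using ln2_le_25_over_36 by (simp add: a_def)
  have lnM: "ln M \<le> M / 16 + 4 * a - 1"
  proof -
    have "ln (M / 16) \<le> M / 16 - 1" using M by (intro ln_le_minus_one) simp
    moreover have "ln (M / 16) = ln M - ln 16" using M by (simp add: ln_div)
    moreover have "ln (16::real) = 4 * a" unfolding a_def using ln_realpow[of 2 4] by simp
    ultimately show ?thesis by simp
  qed
  define L0 where "L0 = (M - 3) * a"
  have LL0: "\<Lambda> \<ge> L0" using L by (simp add: L0_def a_def)
  have step1: "(\<Lambda> - a)^2 - M * \<Lambda> / 2 \<ge> (L0 - a)^2 - M * L0 / 2"
  proof -
    have "(\<Lambda> - a)^2 - M * \<Lambda> / 2 - ((L0 - a)^2 - M * L0 / 2) = (\<Lambda> - L0) * (\<Lambda> + L0 - 2*a - M/2)"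
      by (simp add: power2_eq_square field_simps)
    moreover have "\<Lambda> + L0 - 2*a - M/2 \<ge> 0"
    proof -
      have "L0 \<ge> (M - 3) * (2/3)" unfolding L0_def using a1 M by (intro mult_left_mono) auto
      moreover have "(M - 3) * (2/3) = 2*M/3 - 2" by (simp add: field_simps)
      ultimately show ?thesis using LL0 a2 M by linarith
    qed
    ultimately show ?thesis using LL0 mult_nonneg_nonneg[of "\<Lambda> - L0" "\<Lambda> + L0 - 2*a - M/2"] by linarith
  qed
  have g: "(L0 - a)^2 - M * L0 / 2 - M * (M / 16 + 4 * a - 1) / 2 \<ge> 0"
  proof -
    define g0 where "g0 = (4/9) * (M-4)^2 - M*(M-3)/3 - M^2/32 - 4*M/3 + M/2"
    have "(L0 - a)^2 - M * L0 / 2 - M * (M / 16 + 4 * a - 1) / 2 - g0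
        = (a - 2/3) * ((a + 2/3) * (M-4)^2 - M*(M-3)/2 - 2*M)"
      unfolding L0_def g0_def by (rule K_id)
    moreover have "(a + 2/3) * (M-4)^2 - M*(M-3)/2 - 2*M \<ge> 0"
    proof -
      have "(a + 2/3) * (M-4)^2 \<ge> (4/3) * (M-4)^2" using a1 by (intro mult_right_mono) auto
      moreover have "(4/3) * (M-4)^2 - M*(M-3)/2 - 2*M = (5/6)*M^2 - (67/6) * M + 64/3"
        by (simp add: power2_eq_square field_simps)
      moreover have "(5/6)*M^2 - (67/6) * M \<ge> 0"
      proof -
        have "M * M \<ge> 14 * M" using M by (intro mult_right_mono) auto
        then show ?thesis using M by (simp add: power2_eq_square)
      qed
      ultimately show ?thesis by linarith
    qed
    moreover have "g0 \<ge> 0"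
    proof -
      have "g0 = (23 * M^2 - 976 * M + 2048) / 288" unfolding g0_def by (simp add: power2_eq_square field_simps)
      moreover have "23 * M^2 - 976 * M + 2048 \<ge> 0"
      proof (cases "M \<ge> 43")
        case True
        have "M * M \<ge> 43 * M" using True M by (intro mult_right_mono) auto
        then show ?thesis using M by (simp add: power2_eq_square)
      next
        case False
        have "M * (23 * M - 976) \<ge> 43 * (23 * 41 - 976)"
        proof -
          have "M * (23 * M - 976) \<ge> M * (23 * 41 - 976)" using M by (intro mult_left_mono) auto
          moreover have "M * (23 * 41 - 976) \<ge> 43 * (23 * 41 - 976)" using False by simp
          ultimately show ?thesis by linarith
        qed
        then show ?thesis by (simp add: power2_eq_square algebra_simps)
      qed
      ultimately show ?thesis by simp
    qed
    ultimately show ?thesis using a1 by (smt (verit) mult_nonneg_nonneg)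
  qed
  have "M * ln M \<le> M * (M / 16 + 4 * a - 1)" using lnM M by (intro mult_left_mono) auto
  from lin_aux[OF this step1 g] show ?thesis unfolding a_def .
qed


lemma cc_ln: assumes "N \<ge> 4" shows "real (cc N) * ln (real N) \<le> real N * ln (real (LL N))"
proof -
  have "real (cc N) * ln (real N) = (\<Sum>p\<in>PF N. real (pcomp N p) * ln (real N))"
    by (simp add: cc_eq sum_distrib_right)
  also have "\<dots> \<le> (\<Sum>p\<in>PF N. real N * ln (real (pcomp N p)))"
    by (intro sum_mono q_ln) (auto intro: comp_ge2 comp_le assms)
  also have "\<dots> = real N * ln (real (LL N))" by (simp add: ln_LL sum_distrib_left)
  finally show ?thesis .
qed

lemma cc_ge_ln: "ln (real (LL N)) \<le> real (cc N)"
proof -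
  have "ln (real (LL N)) = (\<Sum>p\<in>PF N. ln (real (pcomp N p)))" by (rule ln_LL)
  also have "\<dots> \<le> (\<Sum>p\<in>PF N. real (pcomp N p))"
  proof (intro sum_mono)
    fix p assume "p \<in> PF N"
    then have "real (pcomp N p) > 0" using comp_ge2[of p N] by simp
    then show "ln (real (pcomp N p)) \<le> real (pcomp N p)" using ln_le_minus_one[of "real (pcomp N p)"] by linarith
  qed
  also have "\<dots> = real (cc N)" by (simp add: cc_eq)
  finally show ?thesis .
qed

lemma LL_Suc: "LL (Suc N) \<le> Suc N * LL N"
proof -
  have "LL (Suc N) = lcm (Suc N) (LL N)"
    unfolding LL_def by (simp add: atLeastAtMostSuc_conv)
  also have "\<dots> \<le> Suc N * LL N"
  proof -
    have "lcm (Suc N) (LL N) dvd Suc N * LL N" by (rule lcm_least) (rule dvd_triv_left, rule dvd_triv_right)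
    then show ?thesis using LL_pos[of N] by (intro dvd_imp_le) auto
  qed
  finally show ?thesis .
qed

lemma four_dvd: "N \<ge> 4 \<Longrightarrow> 4 dvd LL N" by (rule dvd_LL) auto

lemma LL_ln_lower: assumes "N \<ge> 2" shows "(real N - 2) * ln 2 \<le> ln (real (LL N))"
proof -
  have "(2::real) ^ (N - 2) \<le> real (LL N)" using LL_lower[OF assms]
    by (metis of_nat_le_iff of_nat_numeral of_nat_power)
  then have "ln ((2::real) ^ (N - 2)) \<le> ln (real (LL N))" using LL_pos[of N] by (subst ln_le_cancel_iff) auto
  then show ?thesis using assms by (simp add: ln_realpow of_nat_diff)
qed

lemma exists_N:
  fixes n :: nat assumes n: "n \<ge> 1600"
  shows "\<exists>N. N \<ge> 40 \<and> cc N \<le> n \<and> n < cc (Suc N)"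
proof -
  define S where "S = {N. cc N \<le> n}"
  have bnd: "N \<le> 2 * n + 2" if "N \<in> S" for N
  proof (rule ccontr)
    assume "\<not> N \<le> 2 * n + 2"
    then have N: "N \<ge> 2" "real N - 2 > 2 * real n" by auto
    have "(real N - 2) * (2/3) \<le> (real N - 2) * ln 2"
      using ln2_ge_two_thirds N by (intro mult_left_mono) auto
    also have "\<dots> \<le> real (cc N)" using LL_ln_lower[OF N(1)] cc_ge_ln[of N] by linarith
    also have "\<dots> \<le> real n" using that by (simp add: S_def)
    finally have "(real N - 2) * (2/3) \<le> real n" .
    moreover have "(real N - 2) * (2/3) = (2/3) * real N - 4/3" by (simp add: field_simps)
    ultimately show False using N by linarith
  qed
  have fin: "finite S" using bnd by (intro finite_subset[of S "{..2*n+2}"]) auto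
  have s40: "40 \<in> S" using cc_le_sq[of 40] n by (simp add: S_def)
  define N where "N = Max S"
  have "N \<in> S" using fin s40 unfolding N_def by (intro Max_in) auto
  moreover have "N \<ge> 40" using fin s40 unfolding N_def by (intro Max_ge) auto
  moreover have "Suc N \<notin> S" using fin unfolding N_def by (metis Max_ge Suc_n_not_le_n)
  ultimately show ?thesis by (auto simp: S_def not_le)
qed

lemma card_F2vec: "card (F2vec \<nu>) = 2 ^ \<nu>" and finite_F2vec: "finite (F2vec \<nu>)"
proof -
  have e: "F2vec \<nu> = {xs. set xs \<subseteq> (UNIV :: bool set) \<and> length xs = \<nu>}" by (simp add: F2vec_def)
  show "card (F2vec \<nu>) = 2 ^ \<nu>" using card_lists_length_eq[of "UNIV::bool set" \<nu>] unfolding e by simp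
  show "finite (F2vec \<nu>)" using finite_lists_length_eq[of "UNIV::bool set" \<nu>] unfolding e by simp
qed

lemma final_step:
  fixes n :: nat and L :: nat
  assumes "4 dvd L" and "exp (sqrt ((1/4) * real n * ln (real n))) < real L / 2"
    and "\<exists>\<eta>\<in>Alt (F2vec \<nu>). perm_order \<eta> = L div 2"
  shows "\<exists>\<eta> \<in> Alt (F2vec \<nu>). even (perm_order \<eta>) \<and>
           real (perm_order \<eta>) > exp (sqrt ((1/4) * real n * ln (real n)))"
proof -
  obtain \<eta> where e: "\<eta> \<in> Alt (F2vec \<nu>)" "perm_order \<eta> = L div 2" using assms(3) by blast
  have ev: "even (L div 2)" using assms(1) by auto
  have "real (L div 2) = real L / 2" using assms(1) by (auto simp: real_of_nat_div)
  then have r: "real (perm_order \<eta>) = real L / 2" using e(2) by simp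
  have "even (perm_order \<eta>) \<and> real (perm_order \<eta>) > exp (sqrt ((1/4) * real n * ln (real n)))"
    using ev e(2) r assms(2) by simp
  then show ?thesis using e(1) by blast
qed

lemma large_case:
  fixes \<nu> n :: nat
  assumes "\<nu> \<ge> 11" and "n = 2 ^ \<nu>"
  shows "\<exists>\<eta> \<in> Alt (F2vec \<nu>). even (perm_order \<eta>) \<and>
           real (perm_order \<eta>) > exp (sqrt ((1/4) * real n * ln (real n)))"
proof -
  have "n \<ge> 2 ^ 11" unfolding assms(2) using assms(1) by (intro power_increasing) auto
  then have n: "n \<ge> 1600" by simp
  obtain N where N: "N \<ge> 40" "cc N \<le> n" "n < cc (Suc N)" using exists_N[OF n] by blast
  have w: "\<exists>\<eta>\<in>Alt (F2vec \<nu>). perm_order \<eta> = Lcm (CS N) div 2"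
    using N(2) four_dvd[of N] N(1)
    by (intro witness finite_F2vec finite_CS zero_CS) (auto simp: card_F2vec assms(2) Lcm_CS cc_def)
  define \<Lambda> where "\<Lambda> = ln (real (LL N))"
  define M where "M = real (Suc N)"
  have M41: "M \<ge> 41" using N(1) by (simp add: M_def)
  have LLp: "real (LL N) > 0" using LL_pos[of N] by simp
  have Lam: "\<Lambda> \<ge> (M - 3) * ln 2"
    using LL_ln_lower[of N] N(1) by (simp add: \<Lambda>_def M_def)
  have lnM: "ln M > 0" using M41 by simp
  have n0: "real n > 0" using n by simp
  have c1: "real (cc (Suc N)) * ln M \<le> M * ln (real (LL (Suc N)))"
    using cc_ln[of "Suc N"] N(1) by (simp add: M_def)
  have p1: "0 < real (LL (Suc N))" using LL_pos[of "Suc N"] by simp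
  have h: "real (LL (Suc N)) \<le> real (Suc N * LL N)" using LL_Suc[of N] by (simp only: of_nat_le_iff)
  have "ln (real (LL (Suc N))) \<le> ln (real (Suc N * LL N))"
    by (simp only: ln_le_cancel_iff[OF p1 less_le_trans[OF p1 h]] h)
  also have "\<dots> = ln M + \<Lambda>"
  proof -
    have "real (Suc N * LL N) = M * real (LL N)" by (simp only: M_def of_nat_mult)
    then show ?thesis using LLp M41 by (simp add: ln_mult \<Lambda>_def)
  qed
  finally have c2: "ln (real (LL (Suc N))) \<le> ln M + \<Lambda>" .
  have "real n * ln M < real (cc (Suc N)) * ln M" using N(3) lnM by simp
  also have "\<dots> \<le> M * (ln M + \<Lambda>)" 
  proof -
    have "M * ln (real (LL (Suc N))) \<le> M * (ln M + \<Lambda>)" using c2 M41 by (intro mult_left_mono) auto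
    then show ?thesis using c1 by linarith
  qed
  finally have c3: "real n * ln M < M * (ln M + \<Lambda>)" .
  have "real n < M * M"
  proof -
    have "cc (Suc N) \<le> Suc N * Suc N" by (rule cc_le_sq)
    then show ?thesis using N(3) unfolding M_def by (metis of_nat_less_iff of_nat_mult order_less_le_trans of_nat_le_iff)
  qed
  then have "ln (real n) < ln (M * M)" using n0 by simp
  then have c4: "ln (real n) < 2 * ln M" using M41 by (simp add: ln_mult)
  have lnn: "ln (real n) > 0" using n by simp
  have "(1/4) * real n * ln (real n) \<le> (1/4) * real n * (2 * ln M)"
    using c4 n0 by (intro mult_left_mono) auto
  also have "\<dots> = (real n * ln M) / 2" by simp
  also have "\<dots> < (M * \<Lambda> + M * ln M) / 2" using c3 by (simp add: algebra_simps)
  also have "\<dots> \<le> (\<Lambda> - ln 2)^2" by (rule K_ineq[OF M41 Lam])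
  finally have q: "(1/4) * real n * ln (real n) < (\<Lambda> - ln 2)^2" .
  have pos: "\<Lambda> - ln 2 > 0"
  proof -
    have "(M - 3) * ln 2 \<ge> 38 * ln 2" using M41 by (intro mult_right_mono) auto
    then show ?thesis using Lam ln2_ge_two_thirds by linarith
  qed
  have "sqrt ((1/4) * real n * ln (real n)) < sqrt ((\<Lambda> - ln 2)^2)" using q by (subst real_sqrt_less_iff) simp
  also have "\<dots> = \<Lambda> - ln 2" using pos by simp
  finally have "exp (sqrt ((1/4) * real n * ln (real n))) < exp (\<Lambda> - ln 2)" by simp
  also have "\<dots> = real (LL N) / 2" using LLp by (simp add: \<Lambda>_def exp_diff)
  finally have ineq: "exp (sqrt ((1/4) * real n * ln (real n))) < real (LL N) / 2" .
  show ?thesis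
    using final_step[OF four_dvd[of N] ineq] N(1) w by (simp add: Lcm_CS)
qed

lemma small_case:
  fixes \<nu> n k :: nat and A :: "nat set"
  assumes n: "n = 2 ^ \<nu>" and A: "finite A" "0 \<notin> A" "\<Sum>A \<le> n" "4 dvd Lcm A"
    and k: "25 * real n * real \<nu> \<le> 144 * real k ^ 2"
    and big: "3 ^ k < real (Lcm A) / 2"
  shows "\<exists>\<eta> \<in> Alt (F2vec \<nu>). even (perm_order \<eta>) \<and>
           real (perm_order \<eta>) > exp (sqrt ((1/4) * real n * ln (real n)))"
proof -
  have w: "\<exists>\<eta>\<in>Alt (F2vec \<nu>). perm_order \<eta> = Lcm A div 2"
    using A by (intro witness finite_F2vec) (auto simp: card_F2vec n)
  have n1: "real n \<ge> 1" using n by simp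
  have lnn: "ln (real n) = real \<nu> * ln 2" using n by (simp add: ln_realpow)
  have "(1/4) * real n * ln (real n) \<le> (1/4) * real n * (real \<nu> * (25/36))"
    unfolding lnn using ln2_le_25_over_36 n1 by (intro mult_left_mono) auto
  also have "\<dots> \<le> (real k)^2" using k by simp
  finally have "sqrt ((1/4) * real n * ln (real n)) \<le> sqrt ((real k)^2)" by (subst real_sqrt_le_iff) 
  then have s: "sqrt ((1/4) * real n * ln (real n)) \<le> real k" by simp
  have "exp (sqrt ((1/4) * real n * ln (real n))) \<le> exp (real k)" using s by simp
  also have "\<dots> = exp 1 ^ k" by (metis exp_of_nat_mult mult.right_neutral)
  also have "\<dots> \<le> 3 ^ k" using exp_le by (intro power_mono) auto
  also have "\<dots> < real (Lcm A) / 2" by (rule big)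
  finally have ineq: "exp (sqrt ((1/4) * real n * ln (real n))) < real (Lcm A) / 2" .
  show ?thesis by (rule final_step[OF A(4) ineq w])
qed

lemma case7: "\<exists>\<eta> \<in> Alt (F2vec 7). even (perm_order \<eta>) \<and>
           real (perm_order \<eta>) > exp (sqrt ((1/4) * real ((2::nat)^7) * ln (real ((2::nat)^7))))"
proof (rule small_case[where A = "{5,7,9,11,13,16,17,19,23}" and k = 13])
  have L: "Lcm {5,7,9,11,13,16,17,19,23::nat} = 5354228880" by (simp add: lcm_nat_def gcd_non_0_nat)
  show "4 dvd Lcm {5,7,9,11,13,16,17,19,23::nat}" unfolding L by simp
  show "3 ^ 13 < real (Lcm {5,7,9,11,13,16,17,19,23::nat}) / 2" unfolding L by simp
qed simp_all

lemma case8: "\<exists>\<eta> \<in> Alt (F2vec 8). even (perm_order \<eta>) \<and>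
           real (perm_order \<eta>) > exp (sqrt ((1/4) * real ((2::nat)^8) * ln (real ((2::nat)^8))))"
proof (rule small_case[where A = "{7,11,13,17,19,23,25,27,29,31,32}" and k = 19])
  have L: "Lcm {7,11,13,17,19,23,25,27,29,31,32::nat} = 144403552893600" by (simp add: lcm_nat_def gcd_non_0_nat)
  show "4 dvd Lcm {7,11,13,17,19,23,25,27,29,31,32::nat}" unfolding L by simp
  show "3 ^ 19 < real (Lcm {7,11,13,17,19,23,25,27,29,31,32::nat}) / 2" unfolding L by simp
qed simp_all

lemma case9: "\<exists>\<eta> \<in> Alt (F2vec 9). even (perm_order \<eta>) \<and>
           real (perm_order \<eta>) > exp (sqrt ((1/4) * real ((2::nat)^9) * ln (real ((2::nat)^9))))"
proof (rule small_case[where A = "{11,13,17,19,23,25,27,29,31,32,37,41,43,47,49,53}" and k = 29])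
  have L: "Lcm {11,13,17,19,23,25,27,29,31,32,37,41,43,47,49,53::nat} = 164249358725037825439200" by (simp add: lcm_nat_def gcd_non_0_nat)
  show "4 dvd Lcm {11,13,17,19,23,25,27,29,31,32,37,41,43,47,49,53::nat}" unfolding L by simp
  show "3 ^ 29 < real (Lcm {11,13,17,19,23,25,27,29,31,32,37,41,43,47,49,53::nat}) / 2" unfolding L by simp
qed simp_all

lemma case10: "\<exists>\<eta> \<in> Alt (F2vec 10). even (perm_order \<eta>) \<and>
           real (perm_order \<eta>) > exp (sqrt ((1/4) * real ((2::nat)^10) * ln (real ((2::nat)^10))))"
proof (rule small_case[where A = "{11,13,17,19,23,25,29,31,37,41,43,47,49,53,59,61,64,67,71,73,79,81}" and k = 43])
  have L: "Lcm {11,13,17,19,23,25,29,31,37,41,43,47,49,53,59,61,64,67,71,73,79,81::nat} = 97301577764381948734868316916891200" by (simp add: lcm_nat_def gcd_non_0_nat)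
  show "4 dvd Lcm {11,13,17,19,23,25,29,31,37,41,43,47,49,53,59,61,64,67,71,73,79,81::nat}" unfolding L by simp
  show "3 ^ 43 < real (Lcm {11,13,17,19,23,25,29,31,37,41,43,47,49,53,59,61,64,67,71,73,79,81::nat}) / 2" unfolding L by simp
qed simp_all

theorem mainTheorem13:
  fixes \<nu> n :: nat
  assumes "\<nu> \<ge> 7" and "n = 2 ^ \<nu>"
  shows "\<exists>\<eta> \<in> Alt (F2vec \<nu>). even (perm_order \<eta>) \<and>
           real (perm_order \<eta>) > exp (sqrt ((1/4) * real n * ln (real n)))"
proof -
  consider "\<nu> = 7" | "\<nu> = 8" | "\<nu> = 9" | "\<nu> = 10" | "\<nu> \<ge> 11" using assms(1) by linarith
  then show ?thesis
  proof cases
    case 1 then show ?thesis using case7 assms(2) by simp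
  next
    case 2 then show ?thesis using case8 assms(2) by simp
  next
    case 3 then show ?thesis using case9 assms(2) by simp
  next
    case 4 then show ?thesis using case10 assms(2) by simp
  next
    case 5 then show ?thesis using large_case assms(2) by blast
  qed
qed


end
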